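(* Let $T$ be a tree on $S$ and let $\{u,v\}$ be an edge of $T$ with at most one of $u,v$ labelled. If $\mathrm{md}(u,v)>0$, then the tree $T/\{u,v\}$ obtained by contracting this edge satisfies $\mathrm{MP}(T/\{u,v\})>\mathrm{MP}(T)$. Equivalently, if contracting $\{u,v\}$ does not increase the MP-cost, then $\mathrm{md}(u,v)=0$.
   Context: Fix integers $n\ge 2$ and $m\ge 1$, and finite nonempty sets $\Sigma_1,\dots,\Sigma_m$ (the states of characters $1,\dots,m$). A set of species $S=\{S_1,\dots,S_n\}$ is given, each species $S_j$ being an $m$-tuple $(s_{j,1},\dots,s_{j,m})\in\Sigma_1\times\cdots\times\Sigma_m$. A tree on $S$ is a finite unrooted tree (connected acyclic undirected graph) $T$ together with an injective map assigning each species $S_j$ to a node of $T$. Nodes receiving a species are called labelled, the others unlabelled. A fit of $T$ is a map $f$ assigning to every node $v$ a tuple $f(v)=(f(v)_1,\dots,f(v)_m)\in\Sigma_1\times\cdots\times\Sigma_m$ such that $f(v)=S_j$ whenever $v$ is labelled with $S_j$. The cost of $f$ is $\sum_{\{u,v\}\in E(T)} h(f(u),f(v))$, where $h$ is the Hamming distance. The MP-cost $\mathrm{MP}(T)$ is the minimum cost over all fits of $T$. A best fit is a fit of cost $\mathrm{MP}(T)$. Root sets: for a node $v$ and character $i$, $VV(v)_i=\{f(v)_i : f \text{ a best fit of } T\}\subseteq\Sigma_i$ (for a labelled node this is the singleton containing its species' $i$-th state). For adjacent nodes $u,v$, the min-cost is $\mathrm{md}(u,v)=|\{i\in\{1,\dots,m\}: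 VV(u)_i\cap VV(v)_i=\emptyset\}|$. Edge contraction: for an edge $\{u,v\}$ of $T$ with at most one of $u,v$ labelled, $T/\{u,v\}$ is obtained by replacing $u$ and $v$ by a single new node $w$ adjacent to every node that was adjacent to $u$ or to $v$ (other than $u,v$ themselves); $w$ carries the species of $u$ or $v$ if one of them is labelled, and is unlabelled otherwise. All other nodes, edges and labels are unchanged. *)

theory Defs
  imports Main
begin

(* Conventions: characters are indexed 0..m-1, species 0..n-1.
   A state tuple is a function nat => 'a, of which only arguments < m matter.
   A tree has node set V :: 'v set and edge set E :: 'v set set (2-element subsets);
   the injective labelling is loc :: nat => 'v (species j sits at node loc j). *)

definition is_tree :: "'v set \<Rightarrow> 'v set set \<Rightarrow> bool" where
  "is_tree V E \<longleftrightarrow>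
     finite V \<and> V \<noteq> {} \<and>
     (\<forall>e\<in>E. e \<subseteq> V \<and> card e = 2) \<and>
     (\<forall>x\<in>V. \<forall>y\<in>V. (x, y) \<in> {(a, b). {a, b} \<in> E}\<^sup>*) \<and>
     \<not> (\<exists>c. length c \<ge> 3 \<and> distinct c \<and>
            (\<forall>k < length c. {c ! k, c ! ((k + 1) mod length c)} \<in> E))"

definition is_tree_on :: "nat \<Rightarrow> 'v set \<Rightarrow> 'v set set \<Rightarrow> (nat \<Rightarrow> 'v) \<Rightarrow> bool" where
  "is_tree_on n V E loc \<longleftrightarrow> is_tree V E \<and> inj_on loc {..<n} \<and> loc ` {..<n} \<subseteq> V"

definition is_fit :: "nat \<Rightarrow> (nat \<Rightarrow> 'a set) \<Rightarrow> 'v set \<Rightarrow> nat \<Rightarrow> (nat \<Rightarrow> nat \<Rightarrow> 'a)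
                      \<Rightarrow> (nat \<Rightarrow> 'v) \<Rightarrow> ('v \<Rightarrow> nat \<Rightarrow> 'a) \<Rightarrow> bool" where
  "is_fit m Sig V n S loc f \<longleftrightarrow>
     (\<forall>v\<in>V. \<forall>i<m. f v i \<in> Sig i) \<and> (\<forall>j<n. \<forall>i<m. f (loc j) i = S j i)"

definition edge_cost :: "nat \<Rightarrow> 'v set \<Rightarrow> ('v \<Rightarrow> nat \<Rightarrow> 'a) \<Rightarrow> nat" where
  "edge_cost m e f = card {i. i < m \<and> (\<exists>x\<in>e. \<exists>y\<in>e. f x i \<noteq> f y i)}"

definition fit_cost :: "nat \<Rightarrow> 'v set set \<Rightarrow> ('v \<Rightarrow> nat \<Rightarrow> 'a) \<Rightarrow> nat" where
  "fit_cost m E f = (\<Sum>e\<in>E. edge_cost m e f)"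

definition MP :: "nat \<Rightarrow> (nat \<Rightarrow> 'a set) \<Rightarrow> 'v set \<Rightarrow> 'v set set \<Rightarrow> nat
                  \<Rightarrow> (nat \<Rightarrow> nat \<Rightarrow> 'a) \<Rightarrow> (nat \<Rightarrow> 'v) \<Rightarrow> nat" where
  "MP m Sig V E n S loc = Inf (fit_cost m E ` {f. is_fit m Sig V n S loc f})"

definition best_fit :: "nat \<Rightarrow> (nat \<Rightarrow> 'a set) \<Rightarrow> 'v set \<Rightarrow> 'v set set \<Rightarrow> nat
                  \<Rightarrow> (nat \<Rightarrow> nat \<Rightarrow> 'a) \<Rightarrow> (nat \<Rightarrow> 'v) \<Rightarrow> ('v \<Rightarrow> nat \<Rightarrow> 'a) \<Rightarrow> bool" where
  "best_fit m Sig V E n S loc f \<longleftrightarrow>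
     is_fit m Sig V n S loc f \<and> fit_cost m E f = MP m Sig V E n S loc"

definition VV :: "nat \<Rightarrow> (nat \<Rightarrow> 'a set) \<Rightarrow> 'v set \<Rightarrow> 'v set set \<Rightarrow> nat
                  \<Rightarrow> (nat \<Rightarrow> nat \<Rightarrow> 'a) \<Rightarrow> (nat \<Rightarrow> 'v) \<Rightarrow> 'v \<Rightarrow> nat \<Rightarrow> 'a set" where
  "VV m Sig V E n S loc v i = {f v i | f. best_fit m Sig V E n S loc f}"

definition md :: "nat \<Rightarrow> (nat \<Rightarrow> 'a set) \<Rightarrow> 'v set \<Rightarrow> 'v set set \<Rightarrow> nat
                  \<Rightarrow> (nat \<Rightarrow> nat \<Rightarrow> 'a) \<Rightarrow> (nat \<Rightarrow> 'v) \<Rightarrow> 'v \<Rightarrow> 'v \<Rightarrow> nat" where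
  "md m Sig V E n S loc u v =
     card {i. i < m \<and> VV m Sig V E n S loc u i \<inter> VV m Sig V E n S loc v i = {}}"

(* Contraction of edge {u,v} into the node w (w is either u, v, or a node not in V):
   every node other than u, v is kept; u and v are mapped to w. *)
definition cmap :: "'v \<Rightarrow> 'v \<Rightarrow> 'v \<Rightarrow> 'v \<Rightarrow> 'v" where
  "cmap u v w x = (if x = u \<or> x = v then w else x)"

definition contr_V :: "'v set \<Rightarrow> 'v \<Rightarrow> 'v \<Rightarrow> 'v \<Rightarrow> 'v set" where
  "contr_V V u v w = cmap u v w ` V"

definition contr_E :: "'v set set \<Rightarrow> 'v \<Rightarrow> 'v \<Rightarrow> 'v \<Rightarrow> 'v set set" where
  "contr_E E u v w = (\<lambda>e. cmap u v w ` e) ` (E - {{u, v}})"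

definition contr_loc :: "(nat \<Rightarrow> 'v) \<Rightarrow> 'v \<Rightarrow> 'v \<Rightarrow> 'v \<Rightarrow> nat \<Rightarrow> 'v" where
  "contr_loc loc u v w = cmap u v w \<circ> loc"

end

theory Submission
  imports Defs
begin

lemma edge_cost_comp:
  "edge_cost m e (\<lambda>x. g (c x)) = edge_cost m (c ` e) g"
  unfolding edge_cost_def by (rule arg_cong[where f=card]) auto

lemma tri_lemma:
  assumes "{p, q} \<in> E" "{p, r} \<in> E" "{q, r} \<in> E" "p \<noteq> q" "p \<noteq> r" "q \<noteq> r"
  shows "\<exists>c. length c \<ge> 3 \<and> distinct c \<and>
            (\<forall>k < length c. {c ! k, c ! ((k + 1) mod length c)} \<in> E)"
proof (rule exI[of _ "[p, q, r]"])
  have rp: "{r, p} \<in> E" using assms(2) by (simp add: insert_commute)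
  have "{[p, q, r] ! k, [p, q, r] ! ((k + 1) mod 3)} \<in> E" if "k < 3" for k
  proof -
    have "k = 0 \<or> k = 1 \<or> k = 2" using that by linarith
    then show ?thesis using assms(1,3) rp by (elim disjE) simp_all
  qed
  moreover have "distinct [p, q, r]" using assms by simp
  ultimately show "length [p, q, r] \<ge> 3 \<and> distinct [p, q, r] \<and>
            (\<forall>k < length [p, q, r]. {[p, q, r] ! k, [p, q, r] ! ((k + 1) mod length [p, q, r])} \<in> E)"
    by simp
qed

theorem lemma6:
  fixes m n :: nat
    and Sig :: "nat \<Rightarrow> 'a set"
    and S :: "nat \<Rightarrow> nat \<Rightarrow> 'a"
    and V :: "'v set" and E :: "'v set set" and loc :: "nat \<Rightarrow> 'v"
    and u v w :: 'v
  assumes "n \<ge> 2" and "m \<ge> 1"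
    and "\<forall>i<m. finite (Sig i) \<and> Sig i \<noteq> {}"
    and "\<forall>j<n. \<forall>i<m. S j i \<in> Sig i"
    and "\<forall>j<n. \<forall>k<n. j \<noteq> k \<longrightarrow> (\<exists>i<m. S j i \<noteq> S k i)"
    and "is_tree_on n V E loc"
    and "{u, v} \<in> E"
    and "\<not> (u \<in> loc ` {..<n} \<and> v \<in> loc ` {..<n})"
    and "w \<notin> V - {u, v}"
    and "md m Sig V E n S loc u v > 0"
  shows "MP m Sig (contr_V V u v w) (contr_E E u v w) n S (contr_loc loc u v w)
           > MP m Sig V E n S loc"
proof (rule ccontr)
  assume le: "\<not> ?thesis"
  define c where "c = cmap u v w"
  define cl where "cl = contr_loc loc u v w"
  have cl: "cl j = c (loc j)" for j unfolding cl_def c_def contr_loc_def by simp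
  have tree: "is_tree V E" and injl: "inj_on loc {..<n}" and locV: "loc ` {..<n} \<subseteq> V"
    using assms(6) unfolding is_tree_on_def by auto
  note T = tree[unfolded is_tree_def]
  note finV = T[THEN conjunct1]
  note Esub = T[THEN conjunct2, THEN conjunct2, THEN conjunct1]
  note nocyc = T[THEN conjunct2, THEN conjunct2, THEN conjunct2, THEN conjunct2]
  have uvV: "u \<in> V" "v \<in> V" using Esub assms(7) by auto
  have "card {u, v} = 2" using Esub assms(7) by blast
  then have uv: "u \<noteq> v" by (cases "u = v") auto
  have finE: "finite E"
    by (rule finite_subset[of E "Pow V"]) (use Esub finV in auto)
  have injcl: "inj_on cl {..<n}"
  proof (rule inj_onI)
    fix j k assume j: "j \<in> {..<n}" and k: "k \<in> {..<n}" and eq: "cl j = cl k"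
    have lj: "loc j \<in> V" and lk: "loc k \<in> V" using locV j k by auto
    have "loc j = loc k"
    proof (cases "loc j = u \<or> loc j = v")
      case True
      then have "cl j = w" unfolding cl c_def cmap_def by auto
      then have "loc k = u \<or> loc k = v"
        using eq lk assms(9) unfolding cl c_def cmap_def by (auto split: if_splits)
      then show ?thesis using True assms(8) j k by auto
    next
      case False
      then have "cl j = loc j" unfolding cl c_def cmap_def by auto
      then show ?thesis using eq lj assms(9) False unfolding cl c_def cmap_def
        by (auto split: if_splits)
    qed
    then show "j = k" using injl j k by (auto dest: inj_onD)
  qed
  define g0 where "g0 = (\<lambda>x i. if \<exists>j<n. cl j = x then S (SOME j. j < n \<and> cl j = x) i
                               else (SOME s. s \<in> Sig i))"
  have "is_fit m Sig (contr_V V u v w) n S cl g0"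
    unfolding is_fit_def
  proof (intro conjI ballI allI impI)
    fix x i assume "i < m"
    show "g0 x i \<in> Sig i"
    proof (cases "\<exists>j<n. cl j = x")
      case True
      then have "(SOME j. j < n \<and> cl j = x) < n" by (metis (mono_tags, lifting) someI_ex)
      then show ?thesis using True \<open>i<m\<close> assms(4) unfolding g0_def by auto
    next
      case False
      then show ?thesis using \<open>i<m\<close> assms(3) unfolding g0_def by (auto intro: some_in_eq[THEN iffD2])
    qed
  next
    fix j i assume j: "j < n" and "i < m"
    have ex: "\<exists>j'<n. cl j' = cl j" using j by auto
    have s: "(SOME j'. j' < n \<and> cl j' = cl j) < n \<and> cl (SOME j'. j' < n \<and> cl j' = cl j) = cl j"
      using ex by (metis (mono_tags, lifting) someI_ex)
    then have "(SOME j'. j' < n \<and> cl j' = cl j) = j" using injcl j by (auto dest: inj_onD)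
    then show "g0 (cl j) i = S j i" unfolding g0_def using ex by simp
  qed
  then have ne: "fit_cost m (contr_E E u v w) ` {f. is_fit m Sig (contr_V V u v w) n S cl f} \<noteq> {}"
    by auto
  obtain g where gfit: "is_fit m Sig (contr_V V u v w) n S cl g"
    and gcost: "fit_cost m (contr_E E u v w) g = MP m Sig (contr_V V u v w) (contr_E E u v w) n S cl"
    using Inf_nat_def1[OF ne] unfolding MP_def by auto
  define f where "f = (\<lambda>x. g (c x))"
  have ffit: "is_fit m Sig V n S loc f"
    using gfit unfolding is_fit_def f_def contr_V_def c_def cl by auto
  have injE: "inj_on (\<lambda>e. c ` e) (E - {{u, v}})"
  proof (rule inj_onI)
    fix e1 e2 assume e1: "e1 \<in> E - {{u, v}}" and e2: "e2 \<in> E - {{u, v}}"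
      and eq: "c ` e1 = c ` e2"
    have gen: "e1 = e2" if e1: "e1 \<in> E - {{u, v}}" and e2: "e2 \<in> E - {{u, v}}"
      and eq: "c ` e1 = c ` e2" and uin: "u \<in> e1 \<or> v \<in> e1" for e1 e2
    proof -
      have shape: "\<exists>x b. e = {x, b} \<and> (x = u \<or> x = v) \<and> b \<in> V \<and> b \<noteq> u \<and> b \<noteq> v"
        if e: "e \<in> E - {{u, v}}" and ue: "u \<in> e \<or> v \<in> e" for e
      proof -
        obtain p q where pq: "e = {p, q}" "p \<noteq> q" using e Esub
          by (metis DiffD1 card_2_iff)
        have pqV: "p \<in> V" "q \<in> V" using e Esub pq by auto
        have ne: "e \<noteq> {u, v}" using e by auto
        show ?thesis
        proof (cases "p = u \<or> p = v")
          case True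
          then have "q \<noteq> u \<and> q \<noteq> v" using pq ne by (auto simp: insert_commute)
          then show ?thesis using True pq pqV by blast
        next
          case False
          then have "q = u \<or> q = v" using ue pq by auto
          then show ?thesis using False pq pqV by (metis insert_commute)
        qed
      qed
      obtain x b where xb: "e1 = {x, b}" "x = u \<or> x = v" "b \<in> V" "b \<noteq> u" "b \<noteq> v"
        using shape[OF e1 uin] by blast
      have cx: "c x = w" using xb unfolding c_def cmap_def by auto
      have cb: "c b = b" using xb unfolding c_def cmap_def by auto
      have bw: "b \<noteq> w" using xb assms(9) by auto
      have "w \<in> c ` e2" using eq xb cx by auto
      then obtain y where y: "y \<in> e2" "c y = w" by auto
      have yV: "y \<in> V" using y e2 Esub by auto
      have "y = u \<or> y = v"
      proof (rule ccontr)
        assume "\<not> ?thesis" then have "c y = y" unfolding c_def cmap_def by auto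
        then show False using y yV assms(9) \<open>\<not> (y = u \<or> y = v)\<close> by auto
      qed
      then obtain x' b' where xb': "e2 = {x', b'}" "x' = u \<or> x' = v" "b' \<in> V" "b' \<noteq> u" "b' \<noteq> v"
        using shape[OF e2] y by blast
      have cx': "c x' = w" using xb' unfolding c_def cmap_def by auto
      have cb': "c b' = b'" using xb' unfolding c_def cmap_def by auto
      have "{w, b} = {w, b'}" using eq xb xb' cx cb cx' cb' by simp
      then have bb: "b = b'" using bw by (auto simp: doubleton_eq_iff)
      have tri: False if "{p, q} \<in> E" "{p, r} \<in> E" "{q, r} \<in> E" "p \<noteq> q" "p \<noteq> r" "q \<noteq> r"
        for p q r
        using tri_lemma[OF that] nocyc by blast
      show ?thesis
      proof (cases "x = x'")
        case True then show ?thesis using xb xb' bb by simp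
      next
        case False
        then have "{x, x'} = {u, v}" using xb xb' by auto
        then have "{x, x'} \<in> E" using assms(7) by simp
        moreover have "{x, b} \<in> E" "{x', b} \<in> E" using xb xb' bb e1 e2 by auto
        ultimately show ?thesis using tri[of x x' b] False xb xb' by auto
      qed
    qed
    show "e1 = e2"
    proof (cases "u \<in> e1 \<or> v \<in> e1")
      case True then show ?thesis using gen[OF e1 e2 eq True] by simp
    next
      case F1: False
      show ?thesis
      proof (cases "u \<in> e2 \<or> v \<in> e2")
        case True then show ?thesis using gen[OF e2 e1 eq[symmetric] True] by simp
      next
        case False
        have "c ` e1 = e1" using F1 unfolding c_def cmap_def by (auto simp: image_def)
        moreover have "c ` e2 = e2" using False unfolding c_def cmap_def by (auto simp: image_def)
        ultimately show ?thesis using eq by metis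
      qed
    qed
  qed
  have "fit_cost m E f = edge_cost m {u, v} f + fit_cost m (E - {{u, v}}) f"
    unfolding fit_cost_def using sum.remove[OF finE assms(7)] by simp
  also have "edge_cost m {u, v} f = 0"
    unfolding edge_cost_def f_def c_def cmap_def by auto
  also have "fit_cost m (E - {{u, v}}) f = fit_cost m (contr_E E u v w) g"
    unfolding fit_cost_def contr_E_def f_def c_def[symmetric]
    by (simp add: sum.reindex[OF injE] edge_cost_comp)
  finally have fc: "fit_cost m E f = MP m Sig (contr_V V u v w) (contr_E E u v w) n S cl"
    using gcost by simp
  have "MP m Sig V E n S loc \<le> fit_cost m E f"
    unfolding MP_def using ffit by (auto intro: cInf_lower)
  then have best: "best_fit m Sig V E n S loc f"
    using fc le ffit unfolding best_fit_def cl_def by simp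
  have emp: "{i. i < m \<and> VV m Sig V E n S loc u i \<inter> VV m Sig V E n S loc v i = {}} = {}"
  proof -
    have "f u i \<in> VV m Sig V E n S loc u i \<inter> VV m Sig V E n S loc v i" for i
    proof -
      have "f u = f v" unfolding f_def c_def cmap_def by simp
      have a: "f u i \<in> VV m Sig V E n S loc u i" unfolding VV_def using best by blast
      have b: "f u i \<in> VV m Sig V E n S loc v i" unfolding VV_def
        using best \<open>f u = f v\<close> by (intro CollectI exI[of _ f]) simp
      show ?thesis using a b by blast
    qed
    then show ?thesis by auto
  qed
  have "md m Sig V E n S loc u v = 0" unfolding md_def by (simp only: emp card.empty)
  then show False using assms(10) by simp
qed

end
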